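(* Let $$C=\begin{bmatrix}0&-\frac{1+i}{4}&-\frac14&0\\0&0&\frac14&\frac{-1+i}{4}\\0&0&0&\frac14\\0&0&0&0\end{bmatrix}.$$ Then $C$ is nilpotent with $\|C\|<1$, $P_C(x,y)=1-\frac{7}{16}xy+\frac{1}{32}x^2y^2$ (so $C$ has the Circularity property), but $Q_C(x,y)\notin\mathbb{C}[xy]$; hence the associated partial isometry $\mathcal{A}(C)$ does not have the Circularity property.
   Context: $P_C(x,y)=\det(I-xC-yC^* )$, $Q_C(x,y)=\det(I-xC-yC^*-xy(I-C^*C))$; $\mathbb{C}[xy]$ is the set of polynomials in the product $xy$ alone. $H_X(\theta)=\frac12(e^{-i\theta}X+e^{i\theta}X^* )$; $X$ has the Circularity property if the spectrum of $H_X(\theta)$ is independent of $\theta$. For a contraction $C\in M_n$: $D_C=I-C^*C$, $d=\operatorname{rank}D_C$, $B_C$ is a $d\times n$ matrix of full row rank with $B_C^*B_C=D_C$, and $\mathcal{A}(C)=\begin{bmatrix}0&B_C\\0&C\end{bmatrix}$. *)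

theory Defs
  imports "Jordan_Normal_Form.Schur_Decomposition" "Jordan_Normal_Form.Char_Poly"
          "Jordan_Normal_Form.DL_Rank"
begin

definition vnorm :: "complex vec \<Rightarrow> real" where
  "vnorm v = sqrt (\<Sum>i<dim_vec v. (cmod (v $ i))^2)"

definition op_norm :: "complex mat \<Rightarrow> real" where
  "op_norm A = Sup {vnorm (A *\<^sub>v v) | v. v \<in> carrier_vec (dim_col A) \<and> vnorm v \<le> 1}"

definition nilpotent_mat :: "complex mat \<Rightarrow> bool" where
  "nilpotent_mat A \<longleftrightarrow> (\<exists>k. A ^\<^sub>m k = 0\<^sub>m (dim_row A) (dim_col A))"

definition P_pol :: "complex mat \<Rightarrow> complex \<Rightarrow> complex \<Rightarrow> complex" where
  "P_pol C x y = det (1\<^sub>m (dim_row C) - x \<cdot>\<^sub>m C - y \<cdot>\<^sub>m mat_adjoint C)"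

definition Q_pol :: "complex mat \<Rightarrow> complex \<Rightarrow> complex \<Rightarrow> complex" where
  "Q_pol C x y = det (1\<^sub>m (dim_row C) - x \<cdot>\<^sub>m C - y \<cdot>\<^sub>m mat_adjoint C
      - (x * y) \<cdot>\<^sub>m (1\<^sub>m (dim_row C) - mat_adjoint C * C))"

definition in_Cxy :: "(complex \<Rightarrow> complex \<Rightarrow> complex) \<Rightarrow> bool" where
  "in_Cxy f \<longleftrightarrow> (\<exists>p :: complex poly. \<forall>x y. f x y = poly p (x * y))"

definition H_mat :: "complex mat \<Rightarrow> real \<Rightarrow> complex mat" where
  "H_mat X \<theta> = (1/2 :: complex) \<cdot>\<^sub>m (exp (- \<i> * of_real \<theta>) \<cdot>\<^sub>m X + exp (\<i> * of_real \<theta>) \<cdot>\<^sub>m mat_adjoint X)"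

definition spectrum_ms :: "complex mat \<Rightarrow> complex multiset" where
  "spectrum_ms A = proots (char_poly A)"

definition circularity :: "complex mat \<Rightarrow> bool" where
  "circularity X \<longleftrightarrow> (\<forall>\<theta> \<theta>'. spectrum_ms (H_mat X \<theta>) = spectrum_ms (H_mat X \<theta>'))"

definition D_mat :: "complex mat \<Rightarrow> complex mat" where
  "D_mat C = 1\<^sub>m (dim_col C) - mat_adjoint C * C"

definition mat_rank :: "complex mat \<Rightarrow> nat" where
  "mat_rank A = vec_space.rank (dim_row A) A"

definition is_B_C :: "complex mat \<Rightarrow> complex mat \<Rightarrow> bool" where
  "is_B_C C B \<longleftrightarrow> (let n = dim_col C; d = mat_rank (D_mat C) in
     B \<in> carrier_mat d n \<and> mat_rank B = d \<and> mat_adjoint B * B = D_mat C)"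

definition A_mat :: "complex mat \<Rightarrow> complex mat \<Rightarrow> complex mat" where
  "A_mat C B = four_block_mat (0\<^sub>m (dim_row B) (dim_row B)) B (0\<^sub>m (dim_row C) (dim_row B)) C"

definition C12 :: "complex mat" where
  "C12 = mat_of_rows_list 4
    [[0, - (1 + \<i>) / 4, - 1/4, 0],
     [0, 0, 1/4, (- 1 + \<i>) / 4],
     [0, 0, 0, 1/4],
     [0, 0, 0, 0]]"

end

theory Submission imports Defs begin

lemma det_step: assumes "A \<in> carrier_mat (Suc n) (Suc n)"
  shows "det A = (\<Sum>i<Suc n. A $$ (i,0) * ((-1)^i * det (mat_delete A i 0)))"
  using laplace_expansion_column[OF assms, of 0] by (simp add: cofactor_def)

lemma md_carrier: "A \<in> carrier_mat (Suc n) (Suc n) \<Longrightarrow> mat_delete A i 0 \<in> carrier_mat n n"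
  by (simp add: mat_delete_def)

lemma md_index: "A \<in> carrier_mat (Suc n) (Suc n) \<Longrightarrow> a < n \<Longrightarrow> b < n \<Longrightarrow>
   mat_delete A i 0 $$ (a,b) = A $$ (if a < i then a else Suc a, Suc b)"
  by (simp add: mat_delete_def)

lemma det1: assumes "A \<in> carrier_mat 1 1" shows "det A = A $$ (0,0)"
  using det_step[of A 0] assms md_carrier[of A 0] by simp

lemma det2: assumes "A \<in> carrier_mat 2 2" shows "det A = A $$ (0,0) * A $$ (1,1) - A $$ (1,0) * A $$ (0,1)"
  using det_step[of A 1] assms det1[OF md_carrier[of A 1]] md_index[of A 1]
  by (simp add: numeral_2_eq_2)

definition d3 :: "'a::comm_ring_1 \<Rightarrow> 'a \<Rightarrow> 'a \<Rightarrow> 'a \<Rightarrow> 'a \<Rightarrow> 'a \<Rightarrow> 'a \<Rightarrow> 'a \<Rightarrow> 'a \<Rightarrow> 'a" where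
 "d3 a00 a01 a02 a10 a11 a12 a20 a21 a22 = a00 * (a11 * a22 - a21 * a12) - a10 * (a01 * a22 - a21 * a02)
    + a20 * (a01 * a12 - a11 * a02)"

lemma det3: assumes "A \<in> carrier_mat 3 3" shows "det A =
   d3 (A $$ (0,0)) (A $$ (0,1)) (A $$ (0,2)) (A $$ (1,0)) (A $$ (1,1)) (A $$ (1,2)) (A $$ (2,0)) (A $$ (2,1)) (A $$ (2,2))"
  using det_step[of A 2] assms det2[OF md_carrier[of A 2]] md_index[of A 2]
  by (simp add: numeral_3_eq_3 numeral_2_eq_2 d3_def algebra_simps)

lemma det4: assumes "A \<in> carrier_mat 4 4" shows "det A =
   A $$ (0,0) * d3 (A $$ (1,1)) (A $$ (1,2)) (A $$ (1,3)) (A $$ (2,1)) (A $$ (2,2)) (A $$ (2,3)) (A $$ (3,1)) (A $$ (3,2)) (A $$ (3,3))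
 - A $$ (1,0) * d3 (A $$ (0,1)) (A $$ (0,2)) (A $$ (0,3)) (A $$ (2,1)) (A $$ (2,2)) (A $$ (2,3)) (A $$ (3,1)) (A $$ (3,2)) (A $$ (3,3))
 + A $$ (2,0) * d3 (A $$ (0,1)) (A $$ (0,2)) (A $$ (0,3)) (A $$ (1,1)) (A $$ (1,2)) (A $$ (1,3)) (A $$ (3,1)) (A $$ (3,2)) (A $$ (3,3))
 - A $$ (3,0) * d3 (A $$ (0,1)) (A $$ (0,2)) (A $$ (0,3)) (A $$ (1,1)) (A $$ (1,2)) (A $$ (1,3)) (A $$ (2,1)) (A $$ (2,2)) (A $$ (2,3))"
proof -
  have c: "A \<in> carrier_mat (Suc 3) (Suc 3)" using assms by simp
  have e: "det A = A$$(0,0) * det (mat_delete A 0 0) - A$$(1,0) * det (mat_delete A 1 0)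
     + A$$(2,0) * det (mat_delete A 2 0) - A$$(3,0) * det (mat_delete A 3 0)"
    unfolding det_step[OF c] by (simp add: eval_nat_numeral)
  note m = md_index[OF c]
  have h0: "det (mat_delete A 0 0) = d3 (A $$ (1,1)) (A $$ (1,2)) (A $$ (1,3)) (A $$ (2,1)) (A $$ (2,2)) (A $$ (2,3)) (A $$ (3,1)) (A $$ (3,2)) (A $$ (3,3))"
    unfolding det3[OF md_carrier[OF c]] by (simp add: m eval_nat_numeral)
  have h1: "det (mat_delete A 1 0) = d3 (A $$ (0,1)) (A $$ (0,2)) (A $$ (0,3)) (A $$ (2,1)) (A $$ (2,2)) (A $$ (2,3)) (A $$ (3,1)) (A $$ (3,2)) (A $$ (3,3))"
    unfolding det3[OF md_carrier[OF c]] by (simp add: m eval_nat_numeral)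
  have h2: "det (mat_delete A 2 0) = d3 (A $$ (0,1)) (A $$ (0,2)) (A $$ (0,3)) (A $$ (1,1)) (A $$ (1,2)) (A $$ (1,3)) (A $$ (3,1)) (A $$ (3,2)) (A $$ (3,3))"
    unfolding det3[OF md_carrier[OF c]] by (simp add: m eval_nat_numeral)
  have h3: "det (mat_delete A 3 0) = d3 (A $$ (0,1)) (A $$ (0,2)) (A $$ (0,3)) (A $$ (1,1)) (A $$ (1,2)) (A $$ (1,3)) (A $$ (2,1)) (A $$ (2,2)) (A $$ (2,3))"
    unfolding det3[OF md_carrier[OF c]] by (simp add: m eval_nat_numeral)
  show ?thesis unfolding e h0 h1 h2 h3 by (rule refl)
qed


lemma adj_dims: "dim_row (mat_adjoint A) = dim_col A" "dim_col (mat_adjoint A) = dim_row A"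
  unfolding mat_adjoint_def by (simp_all only: mat_of_rows_carrier length_map cols_length)

lemma adj_index: "i < dim_col A \<Longrightarrow> j < dim_row A \<Longrightarrow> mat_adjoint A $$ (i,j) = conjugate (A $$ (j,i))"
  unfolding mat_adjoint_def
  by (subst mat_of_rows_index) (simp_all add: mat_of_rows_index)

lemma adj_carrier: "A \<in> carrier_mat n m \<Longrightarrow> mat_adjoint A \<in> carrier_mat m n"
  unfolding carrier_mat_def by (simp add: adj_dims)

definition R12 :: "complex list list" where "R12 = [[0, - (1 + \<i>) / 4, - 1/4, 0],
     [0, 0, 1/4, (- 1 + \<i>) / 4],
     [0, 0, 0, 1/4],
     [0, 0, 0, 0]]"
lemma C12_R: "C12 = mat_of_rows_list 4 R12" unfolding C12_def R12_def by (rule refl)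
lemma R12_len: "length R12 = 4" unfolding R12_def by simp
lemma C12_carrier[simp]: "C12 \<in> carrier_mat 4 4" and C12_dims[simp]: "dim_row C12 = 4" "dim_col C12 = 4"
  unfolding C12_R mat_of_rows_list_def R12_len by auto
lemma C12_index: "i < 4 \<Longrightarrow> j < 4 \<Longrightarrow> C12 $$ (i,j) = R12 ! i ! j"
  unfolding C12_R mat_of_rows_list_def R12_len by auto

definition M1 where "M1 a x y = a \<cdot>\<^sub>m 1\<^sub>m 4 - x \<cdot>\<^sub>m C12 - y \<cdot>\<^sub>m mat_adjoint C12"
lemma M1_carrier: "M1 a x y \<in> carrier_mat 4 4" unfolding M1_def carrier_mat_def by (simp add: adj_dims)
lemma M1_index: "i < 4 \<Longrightarrow> j < 4 \<Longrightarrow> M1 a x y $$ (i,j) = (if i = j then a else 0) - x * R12 ! i ! j - y * cnj (R12 ! j ! i)"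
  unfolding M1_def using adj_carrier[OF C12_carrier]
  by (simp add: adj_index adj_dims C12_index conjugate_complex_def)

lemma Pgen: "det (M1 a x y) = a^4 - 7/16 * a^2 * x * y + 1/32 * x^2 * y^2"
  unfolding det4[OF M1_carrier]
  apply (simp add: M1_index R12_def d3_def)
  apply (simp add: field_simps power2_eq_square power4_eq_xxxx)
  done


lemma mult4_index: assumes "A \<in> carrier_mat 4 4" "B \<in> carrier_mat 4 4" "i < 4" "j < 4"
  shows "(A * B) $$ (i,j) = A$$(i,0)*B$$(0,j) + A$$(i,1)*B$$(1,j) + A$$(i,2)*B$$(2,j) + A$$(i,3)*B$$(3,j)"
  using assms by (simp add: scalar_prod_def eval_nat_numeral)

lemma CsC_index: "i < 4 \<Longrightarrow> j < 4 \<Longrightarrow> (mat_adjoint C12 * C12) $$ (i,j) =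
   cnj (R12!0!i) * R12!0!j + cnj (R12!1!i) * R12!1!j + cnj (R12!2!i) * R12!2!j + cnj (R12!3!i) * R12!3!j"
  using adj_carrier[OF C12_carrier]
  by (subst mult4_index) (simp_all add: adj_index adj_dims C12_index conjugate_complex_def)

definition M2 where "M2 x y = 1\<^sub>m 4 - x \<cdot>\<^sub>m C12 - y \<cdot>\<^sub>m mat_adjoint C12
      - (x * y) \<cdot>\<^sub>m (1\<^sub>m 4 - mat_adjoint C12 * C12)"
lemma M2_carrier: "M2 x y \<in> carrier_mat 4 4" unfolding M2_def carrier_mat_def by (simp add: adj_dims)
lemma M2_index: "i < 4 \<Longrightarrow> j < 4 \<Longrightarrow> M2 x y $$ (i,j) = (if i = j then 1 else 0) - x * R12 ! i ! j - y * cnj (R12 ! j ! i)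
   - (x * y) * ((if i = j then 1 else 0) - (cnj (R12!0!i) * R12!0!j + cnj (R12!1!i) * R12!1!j + cnj (R12!2!i) * R12!2!j + cnj (R12!3!i) * R12!3!j))"
proof -
  have d: "dim_row (mat_adjoint C12 * C12) = 4" "dim_col (mat_adjoint C12 * C12) = 4"
    by (simp_all add: adj_dims)
  assume "i < 4" "j < 4"
  then show ?thesis
  unfolding M2_def using adj_carrier[OF C12_carrier] d
  by (simp add: adj_index adj_dims C12_index conjugate_complex_def CsC_index del: index_mult_mat)
qed

lemma Q11: "det (M2 1 1) = 67/2048"
  unfolding det4[OF M2_carrier]
  apply (simp add: M2_index R12_def d3_def)
  apply (simp add: field_simps)
  done

lemma Qm1: "det (M2 (-1) (-1)) = 59/2048"
  unfolding det4[OF M2_carrier]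
  apply (simp add: M2_index R12_def d3_def)
  apply (simp add: field_simps)
  done

lemma Q_M2: "Q_pol C12 x y = det (M2 x y)"
  unfolding Q_pol_def M2_def by simp

lemma one_smult_mat: "(1::'a::comm_ring_1) \<cdot>\<^sub>m A = A" by (rule eq_matI) auto

lemma P_M1: "P_pol C12 x y = det (M1 1 x y)"
  unfolding P_pol_def M1_def by (simp add: one_smult_mat)


lemma less4: "(i::nat) < 4 \<Longrightarrow> i = 0 \<or> i = 1 \<or> i = 2 \<or> i = 3" by auto

lemma C12_upper: "i < 4 \<Longrightarrow> j < 4 \<Longrightarrow> j < i + 1 \<Longrightarrow> C12 $$ (i,j) = 0"
  using less4[of i] less4[of j] by (auto simp: C12_index R12_def)

lemma upper_mult: assumes A: "A \<in> carrier_mat n n" and B: "B \<in> carrier_mat n n"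
  and zA: "\<And>i j. i < n \<Longrightarrow> j < n \<Longrightarrow> j < i + k \<Longrightarrow> A $$ (i,j) = 0"
  and zB: "\<And>i j. i < n \<Longrightarrow> j < n \<Longrightarrow> j < i + 1 \<Longrightarrow> B $$ (i,j) = 0"
  and ij: "i < n" "j < n" "j < i + Suc k"
  shows "(A * B) $$ (i,j) = 0"
proof -
  have "(A * B) $$ (i,j) = (\<Sum>l \<in> {0..<n}. A $$ (i,l) * B $$ (l,j))"
    using A B ij by (simp add: scalar_prod_def)
  also have "\<dots> = 0"
  proof (rule sum.neutral, intro ballI)
    fix l assume "l \<in> {0..<n}"
    then have l: "l < n" by simp
    show "A $$ (i,l) * B $$ (l,j) = 0"
    proof (cases "l < i + k")
      case True then show ?thesis using zA[OF ij(1) l] by simp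
    next
      case False then have "j < l + 1" using ij by simp
      then show ?thesis using zB[OF l ij(2)] by simp
    qed
  qed
  finally show ?thesis .
qed

lemma C12_pow_zero: "i < 4 \<Longrightarrow> j < 4 \<Longrightarrow> j < i + m \<Longrightarrow> (C12 ^\<^sub>m m) $$ (i,j) = 0"
proof (induction m arbitrary: i j)
  case 0 then show ?case by simp
next
  case (Suc m)
  have "(C12 ^\<^sub>m m * C12) $$ (i,j) = 0"
    by (rule upper_mult[of _ 4 _ m], rule pow_carrier_mat, simp, simp, rule Suc.IH, auto intro: C12_upper simp: Suc.prems, insert Suc.prems, simp)
  then show ?case by simp
qed

lemma C12_nil: "nilpotent_mat C12"
  unfolding nilpotent_mat_def
proof (intro exI[of _ 4] eq_matI)
  fix i j assume "i < dim_row (0\<^sub>m (dim_row C12) (dim_col C12) :: complex mat)" "j < dim_col (0\<^sub>m (dim_row C12) (dim_col C12) :: complex mat)"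
  then show "(C12 ^\<^sub>m 4) $$ (i,j) = 0\<^sub>m (dim_row C12) (dim_col C12) $$ (i,j)"
    using C12_pow_zero[of i j 4] by simp
qed (simp_all add: pow_mat_dim_square)



lemma Cv_index: assumes "v \<in> carrier_vec 4" "i < 4"
  shows "(C12 *\<^sub>v v) $ i = R12!i!0 * v$0 + R12!i!1 * v$1 + R12!i!2 * v$2 + R12!i!3 * v$3"
  using assms by (simp add: scalar_prod_def eval_nat_numeral C12_index)

lemma vnorm4: "v \<in> carrier_vec 4 \<Longrightarrow> vnorm v = sqrt ((cmod (v$0))^2 + (cmod (v$1))^2 + (cmod (v$2))^2 + (cmod (v$3))^2)"
  unfolding vnorm_def by (simp add: eval_nat_numeral)

lemma cmod_add_sq: "(cmod (p + q))^2 \<le> 2 * (cmod p)^2 + 2 * (cmod q)^2"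
proof -
  have "cmod (p + q) \<le> cmod p + cmod q" by (rule norm_triangle_ineq)
  then have "(cmod (p + q))^2 \<le> (cmod p + cmod q)^2" by (simp add: power_mono)
  also have "\<dots> \<le> 2 * (cmod p)^2 + 2 * (cmod q)^2"
    using sum_squares_ge_zero by (smt (verit) power2_diff power2_sum zero_le_power2)
  finally show ?thesis .
qed

lemma cmod_mult_sq: "(cmod (k * z))^2 = (cmod k)^2 * (cmod z)^2"
  by (simp add: norm_mult power_mult_distrib)

lemma Cv_bound: assumes v: "v \<in> carrier_vec 4" and n: "vnorm v \<le> 1"
  shows "vnorm (C12 *\<^sub>v v) \<le> sqrt (1/2)"
proof -
  define a where "a = v$0"
  define b where "b = v$1"
  define c where "c = v$2"
  define d where "d = v$3"
  have w: "C12 *\<^sub>v v \<in> carrier_vec 4" using v by (rule mult_mat_vec_carrier[OF C12_carrier])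
  have S: "(cmod a)^2 + (cmod b)^2 + (cmod c)^2 + (cmod d)^2 \<le> 1"
    using n unfolding vnorm4[OF v] a_def b_def c_def d_def by (simp add: real_sqrt_le_1_iff)
  have e0: "(C12 *\<^sub>v v) $ 0 = (- (1 + \<i>) / 4) * b + (- 1/4) * c"
    using Cv_index[OF v, of 0] by (simp add: R12_def b_def c_def)
  have e1: "(C12 *\<^sub>v v) $ 1 = (1/4) * c + ((- 1 + \<i>) / 4) * d"
    using Cv_index[OF v, of 1] by (simp add: R12_def c_def d_def)
  have e2: "(C12 *\<^sub>v v) $ 2 = (1/4) * d"
    using Cv_index[OF v, of 2] by (simp add: R12_def d_def)
  have e3: "(C12 *\<^sub>v v) $ 3 = 0"
    using Cv_index[OF v, of 3] by (simp add: R12_def)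
  have k1: "(cmod (- (1 + \<i>) / 4))^2 = 1/8" by (simp add: norm_divide power_divide cmod_def)
  have k2: "(cmod (- 1/4 :: complex))^2 = 1/16" by (simp add: norm_divide power_divide)
  have k3: "(cmod (1/4 :: complex))^2 = 1/16" by (simp add: norm_divide power_divide)
  have k4: "(cmod ((- 1 + \<i>) / 4))^2 = 1/8" by (simp add: norm_divide power_divide cmod_def)
  have t0: "(cmod ((C12 *\<^sub>v v) $ 0))^2 \<le> 2 * (1/8 * (cmod b)^2) + 2 * (1/16 * (cmod c)^2)"
    unfolding e0 using cmod_add_sq[of "(- (1 + \<i>) / 4) * b" "(- 1/4) * c"]
    unfolding cmod_mult_sq k1 k2 .
  have t1: "(cmod ((C12 *\<^sub>v v) $ 1))^2 \<le> 2 * (1/16 * (cmod c)^2) + 2 * (1/8 * (cmod d)^2)"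
    unfolding e1 using cmod_add_sq[of "(1/4) * c" "((- 1 + \<i>) / 4) * d"]
    unfolding cmod_mult_sq k3 k4 .
  have t2: "(cmod ((C12 *\<^sub>v v) $ 2))^2 = 1/16 * (cmod d)^2"
    unfolding e2 cmod_mult_sq k3 ..
  have "(vnorm (C12 *\<^sub>v v))^2 = (cmod ((C12 *\<^sub>v v) $ 0))^2 + (cmod ((C12 *\<^sub>v v) $ 1))^2 + (cmod ((C12 *\<^sub>v v) $ 2))^2 + (cmod ((C12 *\<^sub>v v) $ 3))^2"
    unfolding vnorm4[OF w] by simp
  also have "\<dots> \<le> 1/2"
  proof -
    have t3: "(cmod ((C12 *\<^sub>v v) $ 3))^2 = 0" using e3 by simp
    show ?thesis using t0 t1 t2 t3 S zero_le_power2[of "cmod a"] zero_le_power2[of "cmod b"]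
      zero_le_power2[of "cmod c"] zero_le_power2[of "cmod d"] by linarith
  qed
  finally have "(vnorm (C12 *\<^sub>v v))^2 \<le> 1/2" .
  then show ?thesis by (simp add: real_le_rsqrt)
qed

lemma C12_norm: "op_norm C12 < 1"
proof -
  let ?S = "{vnorm (C12 *\<^sub>v v) | v. v \<in> carrier_vec (dim_col C12) \<and> vnorm v \<le> 1}"
  have ne: "?S \<noteq> {}"
  proof -
    have "vnorm (0\<^sub>v 4) \<le> 1" unfolding vnorm_def by simp
    then have "\<exists>v. v \<in> carrier_vec (dim_col C12) \<and> vnorm v \<le> 1"
      by (intro exI[of _ "0\<^sub>v 4"]) simp
    then show ?thesis by blast
  qed
  have "Sup ?S \<le> sqrt (1/2)"
    by (rule cSup_least[OF ne]) (auto intro: Cv_bound)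
  also have "sqrt (1/2) < (1::real)" by simp
  finally show ?thesis unfolding op_norm_def .
qed



lemma proots_linprod: "proots (\<Prod>a\<leftarrow>as. [:- a, 1:]) = mset (as :: complex list)"
proof (induction as)
  case Nil then show ?case by simp
next
  case (Cons a as)
  have nz: "(\<Prod>a\<leftarrow>as. [:- a, 1:]) \<noteq> (0 :: complex poly)"
    by (auto simp: prod_list_zero_iff)
  have "proots (\<Prod>a\<leftarrow>a # as. [:- a, 1:]) = proots [:- a, 1:] + proots (\<Prod>a\<leftarrow>as. [:- a, 1:])"
    by (simp only: list.map(2) prod_list.Cons, rule proots_mult) (simp, rule nz)
  then show ?case using Cons.IH by simp
qed

lemma charpoly_spec: assumes "(A :: complex mat) \<in> carrier_mat n n"
  shows "char_poly A = prod_mset (image_mset (\<lambda>a. [:- a, 1:]) (spectrum_ms A))"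
proof -
  obtain as where as: "char_poly A = (\<Prod>a\<leftarrow>as. [:- a, 1:])"
    using char_poly_factorized[OF assms] by blast
  have "spectrum_ms A = mset as" unfolding spectrum_ms_def as by (rule proots_linprod)
  then show ?thesis unfolding as by (simp add: prod_mset_prod_list[symmetric])
qed

lemma H_carrier: "A \<in> carrier_mat n n \<Longrightarrow> H_mat A \<theta> \<in> carrier_mat n n"
  unfolding H_mat_def carrier_mat_def by (simp add: adj_dims)

lemma charM1: "- (char_matrix (H_mat C12 \<theta>) t) = M1 t (exp (- \<i> * of_real \<theta>) / 2) (exp (\<i> * of_real \<theta>) / 2)"
proof (rule eq_matI)
  have c: "mat_adjoint C12 \<in> carrier_mat 4 4" by (rule adj_carrier[OF C12_carrier])
  show "dim_row (- char_matrix (H_mat C12 \<theta>) t) = dim_row (M1 t (exp (- \<i> * of_real \<theta>) / 2) (exp (\<i> * of_real \<theta>) / 2))"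
    using c by (simp add: char_matrix_def H_mat_def M1_def)
  show "dim_col (- char_matrix (H_mat C12 \<theta>) t) = dim_col (M1 t (exp (- \<i> * of_real \<theta>) / 2) (exp (\<i> * of_real \<theta>) / 2))"
    using c by (simp add: char_matrix_def H_mat_def M1_def)
  fix i j assume "i < dim_row (M1 t (exp (- \<i> * of_real \<theta>) / 2) (exp (\<i> * of_real \<theta>) / 2))"
     "j < dim_col (M1 t (exp (- \<i> * of_real \<theta>) / 2) (exp (\<i> * of_real \<theta>) / 2))"
  then have ij: "i < 4" "j < 4" using c by (simp_all add: M1_def)
  show "(- char_matrix (H_mat C12 \<theta>) t) $$ (i, j) = M1 t (exp (- \<i> * of_real \<theta>) / 2) (exp (\<i> * of_real \<theta>) / 2) $$ (i, j)"
    using ij c by (simp add: char_matrix_def H_mat_def M1_def adj_index adj_dims algebra_simps)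
qed

lemma charpoly_H_C12_pt: "poly (char_poly (H_mat C12 \<theta>)) t = poly (char_poly (H_mat C12 0)) t"
proof -
  have e: "exp (- \<i> * of_real \<theta>) * exp (\<i> * of_real \<theta>) = 1"
    by (simp add: exp_add[symmetric])
  have "poly (char_poly (H_mat C12 \<theta>)) t = t^4 - 7/16 * t^2 * (exp (- \<i> * of_real \<theta>) / 2) * (exp (\<i> * of_real \<theta>) / 2)
        + 1/32 * (exp (- \<i> * of_real \<theta>) / 2)^2 * (exp (\<i> * of_real \<theta>) / 2)^2"
    unfolding char_poly_matrix[OF H_carrier[OF C12_carrier]] charM1 Pgen ..
  also have "\<dots> = t^4 - 7/64 * t^2 + 1/512"
    using e by (simp add: field_simps power2_eq_square)
  finally have a: "poly (char_poly (H_mat C12 \<theta>)) t = t^4 - 7/64 * t^2 + 1/512" .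
  have "poly (char_poly (H_mat C12 0)) t = t^4 - 7/16 * t^2 * (1 / 2) * (1 / 2)
        + 1/32 * (1 / 2)^2 * (1 / 2)^2"
    unfolding char_poly_matrix[OF H_carrier[OF C12_carrier]] charM1 Pgen by simp
  then have b: "poly (char_poly (H_mat C12 0)) t = t^4 - 7/64 * t^2 + 1/512" by (simp add: power_divide)
  show ?thesis using a b by simp
qed

lemma charpoly_H_C12: "char_poly (H_mat C12 \<theta>) = char_poly (H_mat C12 0)"
  using poly_eq_poly_eq_iff[of "char_poly (H_mat C12 \<theta>)" "char_poly (H_mat C12 0)"] charpoly_H_C12_pt
  by blast

lemma C12_circ: "circularity C12"
  unfolding circularity_def spectrum_ms_def using charpoly_H_C12 by metis



lemma A_carrier: "B \<in> carrier_mat d 4 \<Longrightarrow> A_mat C12 B \<in> carrier_mat (d+4) (d+4)"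
  unfolding A_mat_def carrier_mat_def by auto

lemma N_block: assumes B: "B \<in> carrier_mat d 4"
  shows "1\<^sub>m (d+4) - x \<cdot>\<^sub>m A_mat C12 B - y \<cdot>\<^sub>m mat_adjoint (A_mat C12 B)
   = four_block_mat (1\<^sub>m d) ((-x) \<cdot>\<^sub>m B) ((-y) \<cdot>\<^sub>m mat_adjoint B) (1\<^sub>m 4 - x \<cdot>\<^sub>m C12 - y \<cdot>\<^sub>m mat_adjoint C12)"
proof (rule eq_matI)
  have A: "A_mat C12 B \<in> carrier_mat (d+4) (d+4)" by (rule A_carrier[OF B])
  have dB: "dim_row B = d" "dim_col B = 4" using B by auto
  show "dim_row (1\<^sub>m (d+4) - x \<cdot>\<^sub>m A_mat C12 B - y \<cdot>\<^sub>m mat_adjoint (A_mat C12 B)) =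
    dim_row (four_block_mat (1\<^sub>m d) ((-x) \<cdot>\<^sub>m B) ((-y) \<cdot>\<^sub>m mat_adjoint B) (1\<^sub>m 4 - x \<cdot>\<^sub>m C12 - y \<cdot>\<^sub>m mat_adjoint C12))"
    using A by (simp add: adj_dims)
  show "dim_col (1\<^sub>m (d+4) - x \<cdot>\<^sub>m A_mat C12 B - y \<cdot>\<^sub>m mat_adjoint (A_mat C12 B)) =
    dim_col (four_block_mat (1\<^sub>m d) ((-x) \<cdot>\<^sub>m B) ((-y) \<cdot>\<^sub>m mat_adjoint B) (1\<^sub>m 4 - x \<cdot>\<^sub>m C12 - y \<cdot>\<^sub>m mat_adjoint C12))"
    using A by (simp add: adj_dims)
  fix i j assume "i < dim_row (four_block_mat (1\<^sub>m d) ((-x) \<cdot>\<^sub>m B) ((-y) \<cdot>\<^sub>m mat_adjoint B) (1\<^sub>m 4 - x \<cdot>\<^sub>m C12 - y \<cdot>\<^sub>m mat_adjoint C12))"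
    "j < dim_col (four_block_mat (1\<^sub>m d) ((-x) \<cdot>\<^sub>m B) ((-y) \<cdot>\<^sub>m mat_adjoint B) (1\<^sub>m 4 - x \<cdot>\<^sub>m C12 - y \<cdot>\<^sub>m mat_adjoint C12))"
  then have ij: "i < d + 4" "j < d + 4" by (simp_all add: adj_dims)
  have Aij: "A_mat C12 B $$ (i,j) = (if i < d then if j < d then 0 else B $$ (i, j - d) else if j < d then 0 else C12 $$ (i - d, j - d))"
    unfolding A_mat_def using ij dB by simp
  have Aji: "A_mat C12 B $$ (j,i) = (if j < d then if i < d then 0 else B $$ (j, i - d) else if i < d then 0 else C12 $$ (j - d, i - d))"
    unfolding A_mat_def using ij dB by simp
  have "(1\<^sub>m (d+4) - x \<cdot>\<^sub>m A_mat C12 B - y \<cdot>\<^sub>m mat_adjoint (A_mat C12 B)) $$ (i,j)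
     = (if i = j then 1 else 0) - x * A_mat C12 B $$ (i,j) - y * conjugate (A_mat C12 B $$ (j,i))"
    using A ij by (simp add: adj_dims adj_index)
  also have "\<dots> = four_block_mat (1\<^sub>m d) ((-x) \<cdot>\<^sub>m B) ((-y) \<cdot>\<^sub>m mat_adjoint B) (1\<^sub>m 4 - x \<cdot>\<^sub>m C12 - y \<cdot>\<^sub>m mat_adjoint C12) $$ (i,j)"
    unfolding Aij Aji using ij dB adj_carrier[OF C12_carrier]
    by (auto simp: adj_dims adj_index)
  finally show "(1\<^sub>m (d+4) - x \<cdot>\<^sub>m A_mat C12 B - y \<cdot>\<^sub>m mat_adjoint (A_mat C12 B)) $$ (i,j) =
     four_block_mat (1\<^sub>m d) ((-x) \<cdot>\<^sub>m B) ((-y) \<cdot>\<^sub>m mat_adjoint B) (1\<^sub>m 4 - x \<cdot>\<^sub>m C12 - y \<cdot>\<^sub>m mat_adjoint C12) $$ (i,j)" .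
qed


lemma LU: assumes B: "B \<in> carrier_mat d 4"
  shows "four_block_mat (1\<^sub>m d) ((-x) \<cdot>\<^sub>m B) ((-y) \<cdot>\<^sub>m mat_adjoint B) (1\<^sub>m 4 - x \<cdot>\<^sub>m C12 - y \<cdot>\<^sub>m mat_adjoint C12)
   = four_block_mat (1\<^sub>m d) (0\<^sub>m d 4) ((-y) \<cdot>\<^sub>m mat_adjoint B) (1\<^sub>m 4) *
     four_block_mat (1\<^sub>m d) ((-x) \<cdot>\<^sub>m B) (0\<^sub>m 4 d)
       (1\<^sub>m 4 - x \<cdot>\<^sub>m C12 - y \<cdot>\<^sub>m mat_adjoint C12 - (x * y) \<cdot>\<^sub>m (mat_adjoint B * B))"
    (is "?F = ?L * ?U")
proof -
  have Bs: "mat_adjoint B \<in> carrier_mat 4 d" by (rule adj_carrier[OF B])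
  have Cs: "mat_adjoint C12 \<in> carrier_mat 4 4" by (rule adj_carrier[OF C12_carrier])
  have BB: "mat_adjoint B * B \<in> carrier_mat 4 4" using Bs B by simp
  let ?S = "1\<^sub>m 4 - x \<cdot>\<^sub>m C12 - y \<cdot>\<^sub>m mat_adjoint C12 - (x * y) \<cdot>\<^sub>m (mat_adjoint B * B)"
  have S: "?S \<in> carrier_mat 4 4" using Cs BB unfolding carrier_mat_def by simp
  have "?L * ?U = four_block_mat (1\<^sub>m d * 1\<^sub>m d + 0\<^sub>m d 4 * 0\<^sub>m 4 d) (1\<^sub>m d * ((-x) \<cdot>\<^sub>m B) + 0\<^sub>m d 4 * ?S)
      (((-y) \<cdot>\<^sub>m mat_adjoint B) * 1\<^sub>m d + 1\<^sub>m 4 * 0\<^sub>m 4 d) (((-y) \<cdot>\<^sub>m mat_adjoint B) * ((-x) \<cdot>\<^sub>m B) + 1\<^sub>m 4 * ?S)"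
    by (rule mult_four_block_mat) (use B Bs S in auto)
  also have "1\<^sub>m d * 1\<^sub>m d + 0\<^sub>m d 4 * 0\<^sub>m 4 d = (1\<^sub>m d :: complex mat)" by simp
  also have "1\<^sub>m d * ((-x) \<cdot>\<^sub>m B) + 0\<^sub>m d 4 * ?S = (-x) \<cdot>\<^sub>m B" using B S by (simp add: left_mult_zero_mat[OF S])
  also have "((-y) \<cdot>\<^sub>m mat_adjoint B) * 1\<^sub>m d + 1\<^sub>m 4 * 0\<^sub>m 4 d = (-y) \<cdot>\<^sub>m mat_adjoint B" using Bs by simp
  also have "((-y) \<cdot>\<^sub>m mat_adjoint B) * ((-x) \<cdot>\<^sub>m B) + 1\<^sub>m 4 * ?S = 1\<^sub>m 4 - x \<cdot>\<^sub>m C12 - y \<cdot>\<^sub>m mat_adjoint C12"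
  proof -
    have "((-y) \<cdot>\<^sub>m mat_adjoint B) * ((-x) \<cdot>\<^sub>m B) = (-y) \<cdot>\<^sub>m ((-x) \<cdot>\<^sub>m (mat_adjoint B * B))"
      using mult_smult_assoc_mat[OF Bs smult_carrier_mat[OF B], of "-y" "-x"] mult_smult_distrib[OF Bs B, of "-x"]
      by simp
    moreover have "1\<^sub>m 4 * ?S = ?S" by (rule left_mult_one_mat[OF S])
    ultimately have e: "((-y) \<cdot>\<^sub>m mat_adjoint B) * ((-x) \<cdot>\<^sub>m B) + 1\<^sub>m 4 * ?S = (-y) \<cdot>\<^sub>m ((-x) \<cdot>\<^sub>m (mat_adjoint B * B)) + ?S"
      by simp
    show ?thesis unfolding e
    proof (rule eq_matI)
      have dBB: "dim_row (mat_adjoint B * B) = 4" "dim_col (mat_adjoint B * B) = 4" using BB by auto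
      fix i j assume "i < dim_row (1\<^sub>m 4 - x \<cdot>\<^sub>m C12 - y \<cdot>\<^sub>m mat_adjoint C12)" "j < dim_col (1\<^sub>m 4 - x \<cdot>\<^sub>m C12 - y \<cdot>\<^sub>m mat_adjoint C12)"
      then have ij: "i < 4" "j < 4" using Cs by auto
      show "((-y) \<cdot>\<^sub>m ((-x) \<cdot>\<^sub>m (mat_adjoint B * B)) + ?S) $$ (i,j) = (1\<^sub>m 4 - x \<cdot>\<^sub>m C12 - y \<cdot>\<^sub>m mat_adjoint C12) $$ (i,j)"
        using ij Cs dBB by (simp add: algebra_simps del: index_mult_mat)
    qed (use Cs BB in auto)
  qed
  finally show ?thesis by simp
qed

lemma det_N: assumes B: "B \<in> carrier_mat d 4"
  shows "det (1\<^sub>m (d+4) - x \<cdot>\<^sub>m A_mat C12 B - y \<cdot>\<^sub>m mat_adjoint (A_mat C12 B))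
    = det (1\<^sub>m 4 - x \<cdot>\<^sub>m C12 - y \<cdot>\<^sub>m mat_adjoint C12 - (x * y) \<cdot>\<^sub>m (mat_adjoint B * B))"
proof -
  have Bs: "mat_adjoint B \<in> carrier_mat 4 d" by (rule adj_carrier[OF B])
  have Cs: "mat_adjoint C12 \<in> carrier_mat 4 4" by (rule adj_carrier[OF C12_carrier])
  have BB: "mat_adjoint B * B \<in> carrier_mat 4 4" using Bs B by simp
  let ?S = "1\<^sub>m 4 - x \<cdot>\<^sub>m C12 - y \<cdot>\<^sub>m mat_adjoint C12 - (x * y) \<cdot>\<^sub>m (mat_adjoint B * B)"
  have S: "?S \<in> carrier_mat 4 4" using Cs BB unfolding carrier_mat_def by simp
  let ?L = "four_block_mat (1\<^sub>m d) (0\<^sub>m d 4) ((-y) \<cdot>\<^sub>m mat_adjoint B) (1\<^sub>m 4)"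
  let ?U = "four_block_mat (1\<^sub>m d) ((-x) \<cdot>\<^sub>m B) (0\<^sub>m 4 d) ?S"
  have L: "?L \<in> carrier_mat (d+4) (d+4)" using Bs by (intro four_block_carrier_mat) auto
  have U: "?U \<in> carrier_mat (d+4) (d+4)" using B S by (intro four_block_carrier_mat) auto
  have dL: "det ?L = 1"
    by (subst det_four_block_mat_upper_right_zero[of _ d _ 4]) (use Bs in auto)
  have dU: "det ?U = det ?S"
    by (subst det_four_block_mat_lower_left_zero[of _ d _ 4]) (use B S in auto)
  show ?thesis unfolding N_block[OF B] LU[OF B] det_mult[OF L U] dL dU by simp
qed


lemma negchar_half: assumes X: "X \<in> carrier_mat n n"
  shows "- (char_matrix (H_mat X \<theta>) (1/2)) = (1/2) \<cdot>\<^sub>m (1\<^sub>m n - exp (- \<i> * of_real \<theta>) \<cdot>\<^sub>m X - exp (\<i> * of_real \<theta>) \<cdot>\<^sub>m mat_adjoint X)"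
proof (rule eq_matI)
  have c: "mat_adjoint X \<in> carrier_mat n n" by (rule adj_carrier[OF X])
  show "dim_row (- (char_matrix (H_mat X \<theta>) (1/2))) = dim_row ((1/2) \<cdot>\<^sub>m (1\<^sub>m n - exp (- \<i> * of_real \<theta>) \<cdot>\<^sub>m X - exp (\<i> * of_real \<theta>) \<cdot>\<^sub>m mat_adjoint X))"
    using c X by (simp add: char_matrix_def H_mat_def)
  show "dim_col (- (char_matrix (H_mat X \<theta>) (1/2))) = dim_col ((1/2) \<cdot>\<^sub>m (1\<^sub>m n - exp (- \<i> * of_real \<theta>) \<cdot>\<^sub>m X - exp (\<i> * of_real \<theta>) \<cdot>\<^sub>m mat_adjoint X))"
    using c X by (simp add: char_matrix_def H_mat_def)
  fix i j assume "i < dim_row ((1/2) \<cdot>\<^sub>m (1\<^sub>m n - exp (- \<i> * of_real \<theta>) \<cdot>\<^sub>m X - exp (\<i> * of_real \<theta>) \<cdot>\<^sub>m mat_adjoint X))"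
     "j < dim_col ((1/2) \<cdot>\<^sub>m (1\<^sub>m n - exp (- \<i> * of_real \<theta>) \<cdot>\<^sub>m X - exp (\<i> * of_real \<theta>) \<cdot>\<^sub>m mat_adjoint X))"
  then have ij: "i < n" "j < n" using c by simp_all
  show "(- (char_matrix (H_mat X \<theta>) (1/2))) $$ (i, j) = ((1/2) \<cdot>\<^sub>m (1\<^sub>m n - exp (- \<i> * of_real \<theta>) \<cdot>\<^sub>m X - exp (\<i> * of_real \<theta>) \<cdot>\<^sub>m mat_adjoint X)) $$ (i, j)"
    using ij c X by (simp add: char_matrix_def H_mat_def adj_index adj_dims algebra_simps)
qed

lemma A_poly_half: assumes B: "B \<in> carrier_mat d 4" and BB: "mat_adjoint B * B = 1\<^sub>m 4 - mat_adjoint C12 * C12"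
  shows "poly (char_poly (H_mat (A_mat C12 B) \<theta>)) (1/2) = (1/2)^(d+4) * det (M2 (exp (- \<i> * of_real \<theta>)) (exp (\<i> * of_real \<theta>)))"
proof -
  have A: "A_mat C12 B \<in> carrier_mat (d+4) (d+4)" by (rule A_carrier[OF B])
  have dc: "dim_col (1\<^sub>m (d+4) - exp (- \<i> * of_real \<theta>) \<cdot>\<^sub>m A_mat C12 B - exp (\<i> * of_real \<theta>) \<cdot>\<^sub>m mat_adjoint (A_mat C12 B)) = d + 4"
    using A by (simp add: adj_dims)
  show ?thesis
    unfolding char_poly_matrix[OF H_carrier[OF A]] negchar_half[OF A] det_smult dc det_N[OF B] BB M2_def
    by simp
qed

lemma exp_pi1: "exp (- \<i> * complex_of_real pi) = -1"
  by (simp add: exp_minus mult.commute)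
lemma exp_pi2: "exp (\<i> * complex_of_real pi) = -1"
  by (simp add: mult.commute)

lemma A_noncirc: assumes "is_B_C C12 B" shows "\<not> circularity (A_mat C12 B)"
proof
  assume circ: "circularity (A_mat C12 B)"
  define d where "d = mat_rank (D_mat C12)"
  have B: "B \<in> carrier_mat d 4" and BB: "mat_adjoint B * B = 1\<^sub>m 4 - mat_adjoint C12 * C12"
    using assms unfolding is_B_C_def d_def D_mat_def Let_def by auto
  have A: "A_mat C12 B \<in> carrier_mat (d+4) (d+4)" by (rule A_carrier[OF B])
  have "spectrum_ms (H_mat (A_mat C12 B) 0) = spectrum_ms (H_mat (A_mat C12 B) pi)"
    using circ unfolding circularity_def by blast
  then have "char_poly (H_mat (A_mat C12 B) 0) = char_poly (H_mat (A_mat C12 B) pi)"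
    using charpoly_spec[OF H_carrier[OF A]] by metis
  then have "poly (char_poly (H_mat (A_mat C12 B) 0)) (1/2) = poly (char_poly (H_mat (A_mat C12 B) pi)) (1/2)"
    by simp
  then have "(1/2)^(d+4) * det (M2 1 1) = (1/2)^(d+4) * det (M2 (-1) (-1))"
    unfolding A_poly_half[OF B BB] exp_pi1 exp_pi2 by simp
  then show False unfolding Q11 Qm1 by simp
qed


lemma Q_not_Cxy: "\<not> in_Cxy (Q_pol C12)"
proof
  assume "in_Cxy (Q_pol C12)"
  then obtain p where p: "\<And>x y. Q_pol C12 x y = poly p (x * y)" unfolding in_Cxy_def by blast
  have "Q_pol C12 1 1 = Q_pol C12 (-1) (-1)" using p[of 1 1] p[of "-1" "-1"] by simp
  then show False unfolding Q_M2 Q11 Qm1 by simp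
qed

theorem mainTheorem12:
  shows "nilpotent_mat C12 \<and> op_norm C12 < 1
    \<and> (\<forall>x y. P_pol C12 x y = 1 - 7/16 * x * y + 1/32 * x^2 * y^2)
    \<and> circularity C12
    \<and> \<not> in_Cxy (Q_pol C12)
    \<and> (\<forall>B. is_B_C C12 B \<longrightarrow> \<not> circularity (A_mat C12 B))"
  using C12_nil C12_norm C12_circ Q_not_Cxy A_noncirc
  by (simp add: P_M1 Pgen)

end
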